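(* Let $G$ be a biconnected plane embedded graph whose external boundary is a simple cycle $C$, and let $f$ be a convex combination map of $G$. If $u$ is an external vertex, then $f(v)\neq f(u)$ for every vertex $v\neq u$.
   Context: Vertices on $C$ are external, others internal. A convex combination map of $G$ is a map $f$ from vertices to $\mathbb{R}^2$ such that the external vertices are mapped bijectively, in cyclic order along $C$, to the corners of a convex polygon $P$, and there are coefficients $\lambda_{uv}\ge0$, $\sum_v\lambda_{uv}=1$, $\lambda_{uv}>0$ iff ($u$ internal and $v$ a neighbour of $u$), with $f(u)=\sum_v\lambda_{uv}f(v)$ for every internal $u$. *)

theory Defs
  imports "HOL-Analysis.Analysis"
begin

definition simple_graph :: "'v set \<Rightarrow> ('v \<Rightarrow> 'v \<Rightarrow> bool) \<Rightarrow> bool" where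
  "simple_graph V E \<longleftrightarrow> finite V \<and> (\<forall>x y. E x y \<longrightarrow> x \<in> V \<and> y \<in> V \<and> x \<noteq> y \<and> E y x)"

definition walk_in :: "'v set \<Rightarrow> ('v \<Rightarrow> 'v \<Rightarrow> bool) \<Rightarrow> 'v list \<Rightarrow> bool" where
  "walk_in S E p \<longleftrightarrow> p \<noteq> [] \<and> set p \<subseteq> S \<and> (\<forall>i. Suc i < length p \<longrightarrow> E (p ! i) (p ! Suc i))"

definition connected_in :: "'v set \<Rightarrow> ('v \<Rightarrow> 'v \<Rightarrow> bool) \<Rightarrow> bool" where
  "connected_in S E \<longleftrightarrow> S \<noteq> {} \<and>
     (\<forall>x\<in>S. \<forall>y\<in>S. \<exists>p. walk_in S E p \<and> hd p = x \<and> last p = y)"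

definition biconnected :: "'v set \<Rightarrow> ('v \<Rightarrow> 'v \<Rightarrow> bool) \<Rightarrow> bool" where
  "biconnected V E \<longleftrightarrow> simple_graph V E \<and> card V \<ge> 3 \<and> connected_in V E \<and>
     (\<forall>x\<in>V. connected_in (V - {x}) E)"

definition simple_cycle :: "'v set \<Rightarrow> ('v \<Rightarrow> 'v \<Rightarrow> bool) \<Rightarrow> 'v list \<Rightarrow> bool" where
  "simple_cycle V E C \<longleftrightarrow> length C \<ge> 3 \<and> distinct C \<and> set C \<subseteq> V \<and>
     (\<forall>i < length C. E (C ! i) (C ! ((i + 1) mod length C)))"

definition plane_embedding ::
  "'v set \<Rightarrow> ('v \<Rightarrow> 'v \<Rightarrow> bool) \<Rightarrow> ('v \<Rightarrow> real^2) \<Rightarrow> ('v \<Rightarrow> 'v \<Rightarrow> real \<Rightarrow> real^2) \<Rightarrow> bool" where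
  "plane_embedding V E pos \<gamma> \<longleftrightarrow>
     inj_on pos V \<and>
     (\<forall>x y. E x y \<longrightarrow> arc (\<gamma> x y) \<and> pathstart (\<gamma> x y) = pos x \<and> pathfinish (\<gamma> x y) = pos y
                      \<and> path_image (\<gamma> y x) = path_image (\<gamma> x y)) \<and>
     (\<forall>x y a b. E x y \<and> E a b \<and> {x, y} \<noteq> {a, b} \<longrightarrow>
          path_image (\<gamma> x y) \<inter> path_image (\<gamma> a b) \<subseteq> pos ` ({x, y} \<inter> {a, b})) \<and>
     (\<forall>x y w. E x y \<and> w \<in> V \<and> pos w \<in> path_image (\<gamma> x y) \<longrightarrow> w = x \<or> w = y)"

definition drawing ::
  "'v set \<Rightarrow> ('v \<Rightarrow> 'v \<Rightarrow> bool) \<Rightarrow> ('v \<Rightarrow> real^2) \<Rightarrow> ('v \<Rightarrow> 'v \<Rightarrow> real \<Rightarrow> real^2) \<Rightarrow> (real^2) set" where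
  "drawing V E pos \<gamma> = pos ` V \<union> (\<Union>{path_image (\<gamma> x y) | x y. E x y})"

definition external_boundary_is ::
  "'v set \<Rightarrow> ('v \<Rightarrow> 'v \<Rightarrow> bool) \<Rightarrow> ('v \<Rightarrow> real^2) \<Rightarrow> ('v \<Rightarrow> 'v \<Rightarrow> real \<Rightarrow> real^2) \<Rightarrow> 'v list \<Rightarrow> bool" where
  "external_boundary_is V E pos \<gamma> C \<longleftrightarrow>
     frontier (outside (drawing V E pos \<gamma>)) =
       (\<Union>i<length C. path_image (\<gamma> (C ! i) (C ! ((i + 1) mod length C))))"

definition cross2 :: "real^2 \<Rightarrow> real^2 \<Rightarrow> real" where
  "cross2 a b = a$1 * b$2 - a$2 * b$1"

text \<open>The points P!0, ..., P!(k-1) are, in this cyclic order, the corners of a convex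
  polygon: every other corner lies strictly on the same side of the line through
  consecutive corners.\<close>
definition convex_polygon_corners :: "(real^2) list \<Rightarrow> bool" where
  "convex_polygon_corners P \<longleftrightarrow> length P \<ge> 3 \<and>
     (\<exists>s::real. (s = 1 \<or> s = -1) \<and>
        (\<forall>i < length P. \<forall>j < length P. j \<noteq> i \<and> j \<noteq> (i + 1) mod length P \<longrightarrow>
           s * cross2 (P ! ((i + 1) mod length P) - P ! i) (P ! j - P ! i) > 0))"

definition convex_combination_map ::
  "'v set \<Rightarrow> ('v \<Rightarrow> 'v \<Rightarrow> bool) \<Rightarrow> 'v list \<Rightarrow> ('v \<Rightarrow> real^2) \<Rightarrow> bool" where
  "convex_combination_map V E C f \<longleftrightarrow>
     convex_polygon_corners (map f C) \<and>
     (\<exists>lam :: 'v \<Rightarrow> 'v \<Rightarrow> real.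
        (\<forall>u\<in>V. \<forall>v\<in>V. lam u v \<ge> 0) \<and>
        (\<forall>u\<in>V. \<forall>v\<in>V. lam u v > 0 \<longleftrightarrow> (u \<notin> set C \<and> E u v)) \<and>
        (\<forall>u \<in> V - set C. (\<Sum>v\<in>V. lam u v) = 1) \<and>
        (\<forall>u \<in> V - set C. f u = (\<Sum>v\<in>V. lam u v *\<^sub>R f v)))"

end

theory Submission
  imports Defs
begin

lemma cross2_inner: "cross2 a x = (vector [- a$2, a$1] :: real^2) \<bullet> x"
  by (simp add: cross2_def inner_vec_def sum_2 vector_def mult.commute)

lemma corner_min:
  assumes "convex_polygon_corners P" "k < length P"
  shows "\<exists>q::real^2. \<forall>j<length P. j \<noteq> k \<longrightarrow> q \<bullet> (P!k) < q \<bullet> (P!j)"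
proof -
  define n where "n = length P"
  have n3: "n \<ge> 3" using assms(1) unfolding convex_polygon_corners_def n_def by auto
  obtain s :: real where s: "s = 1 \<or> s = -1" and
    H: "\<And>i j. i < n \<Longrightarrow> j < n \<Longrightarrow> j \<noteq> i \<Longrightarrow> j \<noteq> (i+1) mod n \<Longrightarrow>
        s * cross2 (P ! ((i + 1) mod n) - P ! i) (P ! j - P ! i) > 0"
    using assms(1) unfolding convex_polygon_corners_def n_def by blast
  define k' where "k' = (k + n - 1) mod n"
  have kn: "k < n" using assms(2) n_def by simp
  have k'n: "k' < n" using n3 by (simp add: k'_def)
  have k'k: "(k'+1) mod n = k"
  proof -
    have "(k' + 1) mod n = ((k + n - 1) + 1) mod n" unfolding k'_def by (simp add: mod_Suc_eq)
    also have "(k + n - 1) + 1 = k + n" using n3 by simp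
    finally show ?thesis using kn by simp
  qed
  define k1 where "k1 = (k+1) mod n"
  have k1n: "k1 < n" using n3 by (simp add: k1_def)
  have kk1: "k1 \<noteq> k"
  proof (cases "k + 1 < n")
    case True then show ?thesis unfolding k1_def by simp
  next
    case False then have "k + 1 = n" using kn by simp
    then show ?thesis unfolding k1_def using n3 by simp
  qed
  have kk': "k' \<noteq> k"
  proof
    assume "k' = k"
    then have "(k+1) mod n = k" using k'k by simp
    then show False using kk1 k1_def by simp
  qed
  have k1k': "k1 \<noteq> k'"
  proof
    assume e: "k1 = k'"
    have "(k1 + 1) mod n = k" using e k'k by simp
    moreover have "(k1 + 1) mod n \<noteq> k"
    proof (cases "k + 2 < n")
      case True then show ?thesis unfolding k1_def by simp
    next
      case False
      then have "k + 2 = n \<or> k + 1 = n" using kn by linarith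
      then show ?thesis
      proof
        assume h: "k + 2 = n"
        then have "k1 = k + 1" unfolding k1_def by simp
        then show ?thesis using h n3 by simp
      next
        assume h: "k + 1 = n"
        then have "k1 = 0" unfolding k1_def by simp
        then show ?thesis using h n3 by simp
      qed
    qed
    ultimately show False by simp
  qed
  define A where "A = P!k1 - P!k"
  define B where "B = P!k - P!k'"
  define q where "q = s *\<^sub>R ((vector [- A$2, A$1] :: real^2) + vector [- B$2, B$1])"
  have a: "\<And>j. j < n \<Longrightarrow> j \<noteq> k \<Longrightarrow> j \<noteq> k1 \<Longrightarrow> s * cross2 A (P!j - P!k) > 0"
    using H[OF kn] unfolding A_def k1_def by auto
  have b: "\<And>j. j < n \<Longrightarrow> j \<noteq> k' \<Longrightarrow> j \<noteq> k \<Longrightarrow> s * cross2 B (P!j - P!k') > 0"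
    using H[OF k'n] k'k unfolding B_def by auto
  have Bk: "cross2 B (P!k - P!k') = 0" unfolding B_def cross2_def by simp
  have Ak1: "cross2 A (P!k1 - P!k) = 0" unfolding A_def cross2_def by simp
  have qform: "\<And>j. q \<bullet> (P!j) - q \<bullet> (P!k) = s * cross2 A (P!j - P!k) + s * cross2 B (P!j - P!k')
        - s * cross2 B (P!k - P!k')"
    unfolding q_def cross2_inner by (simp add: algebra_simps inner_diff_right)
  show ?thesis
  proof (intro exI allI impI)
    fix j assume j: "j < length P" "j \<noteq> k"
    then have jn: "j < n" using n_def by simp
    have "q \<bullet> (P!j) - q \<bullet> (P!k) > 0"
    proof (cases "j = k1")
      case True
      then have "j \<noteq> k'" using k1k' by simp
      then show ?thesis using qform[of j] Bk True Ak1 b[OF jn _ j(2)] by simp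
    next
      case False
      note F = False
      show ?thesis
      proof (cases "j = k'")
        case True
        then show ?thesis using qform[of j] Bk a[OF jn j(2) F] by (simp add: cross2_def)
      next
        case False
        then show ?thesis using qform[of j] Bk a[OF jn j(2) F] b[OF jn False j(2)] by simp
      qed
    qed
    then show "q \<bullet> P ! k < q \<bullet> P ! j" by simp
  qed
qed


lemma propagate:
  fixes lam :: "'v \<Rightarrow> 'v \<Rightarrow> real"
  assumes fin: "finite V"
    and nn: "\<forall>u\<in>V. \<forall>v\<in>V. lam u v \<ge> 0"
    and pos: "\<forall>u\<in>V. \<forall>v\<in>V. lam u v > 0 \<longleftrightarrow> (u \<notin> set C \<and> E u v)"
    and s1: "\<forall>u \<in> V - set C. (\<Sum>v\<in>V. lam u v) = 1"
    and cc: "\<forall>u \<in> V - set C. f u = (\<Sum>v\<in>V. lam u v *\<^sub>R f v)"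
    and w: "w \<in> V" "w \<notin> set C" and mn: "\<forall>x\<in>V. m \<le> q \<bullet> f x" and gw: "q \<bullet> f w = m"
    and x: "x \<in> V" "E w x"
  shows "q \<bullet> f x = m"
proof -
  have "q \<bullet> f w = (\<Sum>y\<in>V. lam w y * (q \<bullet> f y))"
    using cc w by (simp add: inner_sum_right)
  moreover have "(\<Sum>y\<in>V. lam w y * m) = m" using s1 w by (simp add: sum_distrib_right[symmetric])
  ultimately have "(\<Sum>y\<in>V. lam w y * (q \<bullet> f y - m)) = 0"
    using gw by (simp add: right_diff_distrib sum_subtractf)
  moreover have nn2: "\<And>y. y \<in> V \<Longrightarrow> lam w y * (q \<bullet> f y - m) \<ge> 0" using nn mn w by simp
  ultimately have "\<forall>y\<in>V. lam w y * (q \<bullet> f y - m) = 0"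
    using sum_nonneg_eq_0_iff[OF fin nn2] by simp
  then have "lam w x * (q \<bullet> f x - m) = 0" using x by simp
  moreover have "lam w x > 0" using pos w x by simp
  ultimately show ?thesis by simp
qed

lemma propagate_walk:
  assumes stp: "\<And>w x. w \<in> V \<Longrightarrow> w \<notin> set C \<Longrightarrow> g w = m \<Longrightarrow> x \<in> V \<Longrightarrow> E w x \<Longrightarrow> g x = m"
    and wk: "walk_in S E p" and SV: "S \<subseteq> V" and h: "g (hd p) = m"
  shows "i < length p \<Longrightarrow> (\<forall>j<i. p!j \<notin> set C) \<Longrightarrow> g (p!i) = m"
proof (induction i)
  case 0
  then show ?case using h wk unfolding walk_in_def by (simp add: hd_conv_nth)
next
  case (Suc i)
  have IH: "g (p!i) = m" using Suc by simp
  have e: "E (p!i) (p!Suc i)" using wk Suc.prems unfolding walk_in_def by simp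
  have "p!i \<in> set p" "p!Suc i \<in> set p" using Suc.prems by simp_all
  then have "p!i \<in> V" "p!Suc i \<in> V" using wk SV unfolding walk_in_def by auto
  then show ?case using stp[OF _ _ IH _ e] Suc.prems by simp
qed

lemma first_in:
  assumes "i < length p" "P (p!i)"
  shows "\<exists>i'. i' < length p \<and> P (p!i') \<and> (\<forall>j<i'. \<not> P (p!j))"
proof -
  define i' where "i' = (LEAST i. P (p!i))"
  have "P (p!i')" unfolding i'_def by (rule LeastI[of _ i], rule assms(2))
  moreover have "i' \<le> i" unfolding i'_def by (rule Least_le, rule assms(2))
  moreover have "\<forall>j<i'. \<not> P (p!j)" unfolding i'_def using not_less_Least by blast
  ultimately show ?thesis using assms(1) by (intro exI[of _ i']) auto
qed

theorem lemma2p2: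
  fixes V :: "'v set" and E :: "'v \<Rightarrow> 'v \<Rightarrow> bool" and C :: "'v list"
    and pos :: "'v \<Rightarrow> real^2" and \<gamma> :: "'v \<Rightarrow> 'v \<Rightarrow> real \<Rightarrow> real^2"
    and f :: "'v \<Rightarrow> real^2"
  assumes "biconnected V E"
    and "plane_embedding V E pos \<gamma>"
    and "simple_cycle V E C"
    and "external_boundary_is V E pos \<gamma> C"
    and "convex_combination_map V E C f"
    and "u \<in> set C"
    and "v \<in> V" and "v \<noteq> u"
  shows "f v \<noteq> f u"
proof
  assume fvu: "f v = f u"
  have fin: "finite V" and conV: "connected_in V E" and conU: "\<forall>x\<in>V. connected_in (V - {x}) E"
    using assms(1) unfolding biconnected_def simple_graph_def by auto
  have C3: "length C \<ge> 3" and dC: "distinct C" and CV: "set C \<subseteq> V"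
    using assms(3) unfolding simple_cycle_def by auto
  have cpc: "convex_polygon_corners (map f C)" using assms(5) unfolding convex_combination_map_def by simp
  obtain lam :: "'v \<Rightarrow> 'v \<Rightarrow> real" where
    nn: "\<forall>u\<in>V. \<forall>v\<in>V. lam u v \<ge> 0"
    and ps: "\<forall>u\<in>V. \<forall>v\<in>V. lam u v > 0 \<longleftrightarrow> (u \<notin> set C \<and> E u v)"
    and s1: "\<forall>u \<in> V - set C. (\<Sum>v\<in>V. lam u v) = 1"
    and cc: "\<forall>u \<in> V - set C. f u = (\<Sum>v\<in>V. lam u v *\<^sub>R f v)"
    using assms(5) unfolding convex_combination_map_def by blast
  obtain k where k: "k < length C" "C!k = u" using assms(6) by (meson in_set_conv_nth)
  obtain q where q: "\<forall>j<length C. j \<noteq> k \<longrightarrow> q \<bullet> f (C!k) < q \<bullet> f (C!j)"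
    using corner_min[OF cpc] k by auto
  have qC: "\<And>y. y \<in> set C \<Longrightarrow> y \<noteq> u \<Longrightarrow> q \<bullet> f u < q \<bullet> f y"
  proof -
    fix y assume "y \<in> set C" "y \<noteq> u"
    then obtain j where "j < length C" "C!j = y" by (meson in_set_conv_nth)
    then show "q \<bullet> f u < q \<bullet> f y" using q k \<open>y \<noteq> u\<close> by auto
  qed
  define g where "g x = q \<bullet> f x" for x
  have Vne: "V \<noteq> {}" using assms(7) by auto
  define m where "m = Min (g ` V)"
  have mn: "\<forall>x\<in>V. m \<le> q \<bullet> f x" unfolding m_def g_def using fin by simp
  obtain w0 where w0: "w0 \<in> V" "g w0 = m" unfolding m_def using fin Vne
    by (metis (no_types, lifting) Min_in finite_imageI image_iff image_is_empty)
  have stp: "\<And>w x. w \<in> V \<Longrightarrow> w \<notin> set C \<Longrightarrow> g w = m \<Longrightarrow> x \<in> V \<Longrightarrow> E w x \<Longrightarrow> g x = m"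
    unfolding g_def using propagate[OF fin nn ps s1 cc _ _ mn] by blast
  have uV: "u \<in> V" using CV assms(6) by auto
  have reach: "\<exists>y\<in>set C. g y = m" if wk: "walk_in S E p" "S \<subseteq> V" "g (hd p) = m" "last p \<in> set C"
    for S p
  proof -
    have "length p - 1 < length p" "p ! (length p - 1) \<in> set C"
      using wk unfolding walk_in_def by (auto simp: last_conv_nth)
    then obtain i where i: "i < length p" "p!i \<in> set C" "\<forall>j<i. p!j \<notin> set C"
      using first_in[of "length p - 1" p "\<lambda>x. x \<in> set C"] by blast
    have "g (p!i) = m"
      using stp wk(1,2,3) i(1,3) by (rule propagate_walk)
    then show ?thesis using i by auto
  qed
  have gum: "g u = m"
  proof -
    obtain p where p: "walk_in V E p" "hd p = w0" "last p = u" using conV w0 uV unfolding connected_in_def by blast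
    then obtain y where y: "y \<in> set C" "g y = m" using reach[of V p] w0 assms(6) by auto
    have "g u \<le> g y" using qC[OF y(1)] unfolding g_def by (cases "y = u") auto
    moreover have "m \<le> g u" using mn uV unfolding g_def by simp
    ultimately show ?thesis using y by simp
  qed
  show False
  proof (cases "v \<in> set C")
    case True
    then show False using qC[OF True assms(8)] fvu by simp
  next
    case False
    have gv: "g v = m" using gum fvu unfolding g_def by simp
    obtain x where x: "x \<in> set C" "x \<noteq> u"
    proof -
      have "card (set C) \<ge> 3" using C3 dC by (simp add: distinct_card)
      moreover have "set C \<subseteq> {u} \<Longrightarrow> card (set C) \<le> 1"
        using card_mono[of "{u}" "set C"] by simp
      ultimately have "\<not> set C \<subseteq> {u}" by linarith
      then show ?thesis using that by blast
    qed
    obtain p where p: "walk_in (V - {u}) E p" "hd p = v" "last p = x"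
      using conU uV x CV assms(7,8) unfolding connected_in_def by blast
    have pV: "V - {u} \<subseteq> V" by auto
    have "length p - 1 < length p" "p ! (length p - 1) \<in> set C"
      using p x unfolding walk_in_def by (auto simp: last_conv_nth)
    then obtain i where i: "i < length p" "p!i \<in> set C" "\<forall>j<i. p!j \<notin> set C"
      using first_in[of "length p - 1" p "\<lambda>x. x \<in> set C"] by blast
    have gi: "g (p!i) = m"
    proof -
      have hp: "g (hd p) = m" using p(2) gv by simp
      show ?thesis using stp p(1) pV hp i(1,3) by (rule propagate_walk)
    qed
    have "p!i \<noteq> u" using p(1) i(1) unfolding walk_in_def by (auto dest: nth_mem)
    then have "g u < g (p!i)" using qC[OF i(2)] unfolding g_def by simp
    then show False using gi gum by simp
  qed
qed

end
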